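(* Let $(X,G)$ be a symmetric $G$-metric space and let $T:X\to X$. Suppose that $X$ is $T$-orbitally complete, that $T$ is orbitally continuous and injective, and that there exist a real number $q<1$ and a non-negative real-valued function $a:X\times X\times X\to[0,\infty)$ such that for all $x,y,z\in X$ with $x\neq y$, \[ G(Tx,Ty,Tz) < q\cdot \max\Big\{ G(x,y,z),\ a(x,y,z)\,G(Tx,y,z)\,G(x,Ty,z)\,G(x,y,Tz),\ [G(x,y,z)\,G(Tx,Ty,Tz)]^{-1}G(x,Tx,Tx)\,G(y,Ty,Ty)\,G(z,Tz,Tz) \Big\}. \] Then for each $x\in X$ the sequence $(T^nx)$ $G$-converges to some $u_x\in X$ and $Tu_x=u_x$. If in addition $a(x,y,z)\leq [G(x,y,z)G(Tx,Ty,Tz)]^{-1}$ (for all $x,y,z\in X$ with $x\ne y$), then $T$ has a unique fixed point.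
   Context: A $G$-metric space is a nonempty set $X$ with a function $G:X\times X\times X\to[0,\infty)$ such that: (G1) $G(x,y,z)=0$ if $x=y=z$; (G2) $G(x,x,y)>0$ whenever $x\neq y$; (G3) $G(x,x,y)\le G(x,y,z)$ whenever $z\neq y$; (G4) $G$ is symmetric in all three variables; (G5) $G(x,y,z)\le G(x,a,a)+G(a,y,z)$ for all $x,y,z,a\in X$. It is symmetric if $G(x,y,y)=G(x,x,y)$ for all $x,y$. A sequence $(x_n)$ $G$-converges to $x$ if $G(x,x_n,x_m)\to 0$ as $n,m\to\infty$ (equivalently $G(x_n,x,x)\to0$); it is $G$-Cauchy if for every $\varepsilon>0$ there is $N$ with $G(x_n,x_m,x_m)<\varepsilon$ for all $n,m\ge N$. For $a\in X$ let $I(a,T)=\{a,Ta,T^2a,\dots\}$. $T$ is orbitally continuous if whenever $T^{n_i}x\to x^*$ ($G$-convergence) for some $x$ and some increasing sequence $(n_i)$, then $TT^{n_i}x\to Tx^*$. $X$ is $T$-orbitally complete if for every $a\in X$, every $G$-Cauchy sequence contained in $I(a,T)$ $G$-converges in $X$. *)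

theory Defs
  imports Complex_Main
begin

definition G_metric :: "('a \<Rightarrow> 'a \<Rightarrow> 'a \<Rightarrow> real) \<Rightarrow> bool" where
  "G_metric G \<longleftrightarrow>
     (\<forall>x y z. G x y z \<ge> 0) \<and>
     (\<forall>x. G x x x = 0) \<and>
     (\<forall>x y. x \<noteq> y \<longrightarrow> G x x y > 0) \<and>
     (\<forall>x y z. z \<noteq> y \<longrightarrow> G x x y \<le> G x y z) \<and>
     (\<forall>x y z. G x y z = G x z y \<and> G x y z = G y x z \<and> G x y z = G y z x
              \<and> G x y z = G z x y \<and> G x y z = G z y x) \<and>
     (\<forall>x y z a. G x y z \<le> G x a a + G a y z)"

definition G_symmetric :: "('a \<Rightarrow> 'a \<Rightarrow> 'a \<Rightarrow> real) \<Rightarrow> bool" where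
  "G_symmetric G \<longleftrightarrow> (\<forall>x y. G x y y = G x x y)"

definition G_converges :: "('a \<Rightarrow> 'a \<Rightarrow> 'a \<Rightarrow> real) \<Rightarrow> (nat \<Rightarrow> 'a) \<Rightarrow> 'a \<Rightarrow> bool" where
  "G_converges G s x \<longleftrightarrow>
     (\<forall>\<epsilon>>0. \<exists>N. \<forall>n m. N \<le> n \<longrightarrow> N \<le> m \<longrightarrow> G x (s n) (s m) < \<epsilon>)"

definition G_Cauchy :: "('a \<Rightarrow> 'a \<Rightarrow> 'a \<Rightarrow> real) \<Rightarrow> (nat \<Rightarrow> 'a) \<Rightarrow> bool" where
  "G_Cauchy G s \<longleftrightarrow>
     (\<forall>\<epsilon>>0. \<exists>N. \<forall>n m. N \<le> n \<longrightarrow> N \<le> m \<longrightarrow> G (s n) (s m) (s m) < \<epsilon>)"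

definition orbit :: "('a \<Rightarrow> 'a) \<Rightarrow> 'a \<Rightarrow> 'a set" where
  "orbit T a = {(T ^^ n) a | n. True}"

definition orbitally_continuous :: "('a \<Rightarrow> 'a \<Rightarrow> 'a \<Rightarrow> real) \<Rightarrow> ('a \<Rightarrow> 'a) \<Rightarrow> bool" where
  "orbitally_continuous G T \<longleftrightarrow>
     (\<forall>x xs (n :: nat \<Rightarrow> nat). strict_mono n \<longrightarrow>
        G_converges G (\<lambda>i. (T ^^ n i) x) xs \<longrightarrow>
        G_converges G (\<lambda>i. T ((T ^^ n i) x)) (T xs))"

definition orbitally_complete :: "('a \<Rightarrow> 'a \<Rightarrow> 'a \<Rightarrow> real) \<Rightarrow> ('a \<Rightarrow> 'a) \<Rightarrow> bool" where
  "orbitally_complete G T \<longleftrightarrow>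
     (\<forall>a s. (\<forall>k. s k \<in> orbit T a) \<longrightarrow> G_Cauchy G s \<longrightarrow> (\<exists>x. G_converges G s x))"

end

theory Submission
  imports Defs
begin

lemma Max3: "Max {A, B, C::real} = max A (max B C)"
  by (simp add: max.commute max.left_commute)

lemma funpow_fix: "T x = x \<Longrightarrow> (T ^^ n) x = x"
  by (induction n) auto

lemma main_part:
  fixes G :: "'a \<Rightarrow> 'a \<Rightarrow> 'a \<Rightarrow> real"
    and T :: "'a \<Rightarrow> 'a"
    and a :: "'a \<Rightarrow> 'a \<Rightarrow> 'a \<Rightarrow> real"
    and q :: real
  assumes GM: "G_metric G" and GS: "G_symmetric G"
    and OC: "orbitally_complete G T" and OCo: "orbitally_continuous G T" and inj: "inj T"
    and q1: "q < 1"
    and H: "\<forall>x y z. x \<noteq> y \<longrightarrow>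
           G (T x) (T y) (T z) < q * Max {G x y z,
              a x y z * G (T x) y z * G x (T y) z * G x y (T z),
              inverse (G x y z * G (T x) (T y) (T z)) * G x (T x) (T x) * G y (T y) (T y) * G z (T z) (T z)}"
  shows "\<exists>u. G_converges G (\<lambda>n. (T ^^ n) x) u \<and> T u = u"
proof -
  have nn: "\<And>x y z. G x y z \<ge> 0" and zz: "\<And>x. G x x x = 0"
    and pos: "\<And>x y. x \<noteq> y \<Longrightarrow> G x x y > 0"
    and perm: "\<And>x y z. G x y z = G x z y \<and> G x y z = G y x z \<and> G x y z = G y z x
              \<and> G x y z = G z x y \<and> G x y z = G z y x"
    and tri: "\<And>x y z a. G x y z \<le> G x a a + G a y z"
    using GM unfolding G_metric_def by blast+
  have sym: "\<And>x y. G x y y = G x x y" using GS unfolding G_symmetric_def by blast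
  have pos2: "\<And>x y. x \<noteq> y \<Longrightarrow> G x y y > 0"
    using pos perm by metis
  define s where "s n = (T ^^ n) x" for n
  have sS: "s (Suc n) = T (s n)" for n by (simp add: s_def)
  have s_eq: "(\<lambda>n. (T ^^ n) x) = s" by (simp add: s_def fun_eq_iff)
  show ?thesis
  proof (cases "T x = x")
    case True
    have "s n = x" for n using funpow_fix[of T x, OF True] s_def by simp
    then have "G_converges G s x" unfolding G_converges_def using zz by simp
    then show ?thesis using True s_eq by auto
  next
    case False
    have dist: "s n \<noteq> s (Suc n)" for n
    proof (induction n)
      case 0 then show ?case using False by (simp add: s_def)
    next
      case (Suc n) then show ?case using inj sS by (metis injD)
    qed
    define d where "d n = G (s n) (s (Suc n)) (s (Suc n))" for n
    have dpos: "d n > 0" for n using pos2 dist d_def by simp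
    have step: "d (Suc n) < q * max (d n) (max 0 (d (Suc n)))" for n
    proof -
      have h: "G (T (s n)) (T (s (Suc n))) (T (s (Suc n))) < q * Max {G (s n) (s (Suc n)) (s (Suc n)),
              a (s n) (s (Suc n)) (s (Suc n)) * G (T (s n)) (s (Suc n)) (s (Suc n)) * G (s n) (T (s (Suc n))) (s (Suc n)) * G (s n) (s (Suc n)) (T (s (Suc n))),
              inverse (G (s n) (s (Suc n)) (s (Suc n)) * G (T (s n)) (T (s (Suc n))) (T (s (Suc n)))) * G (s n) (T (s n)) (T (s n)) * G (s (Suc n)) (T (s (Suc n))) (T (s (Suc n))) * G (s (Suc n)) (T (s (Suc n))) (T (s (Suc n)))}"
        using H dist by blast
      have e: "inverse (d n * d (Suc n)) * d n * d (Suc n) * d (Suc n) = d (Suc n)"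
        using dpos[of n] dpos[of "Suc n"] by (simp add: field_simps)
      have h2: "d (Suc n) < q * Max {d n, 0, inverse (d n * d (Suc n)) * d n * d (Suc n) * d (Suc n)}"
        using h by (simp only: sS[symmetric] d_def zz mult_zero_left mult_zero_right)
      then show ?thesis by (simp only: e Max3)
    qed
    have qpos: "q > 0"
    proof -
      have "0 < d 1" by (rule dpos)
      also have "\<dots> < q * max (d 0) (max 0 (d 1))" using step[of 0] by simp
      finally show ?thesis using dpos[of 0] dpos[of 1]
        by (simp add: zero_less_mult_iff)
    qed
    have dstep: "d (Suc n) \<le> q * d n" for n
    proof -
      have "\<not> d (Suc n) < q * d (Suc n)" using q1 dpos[of "Suc n"]
        by (simp add: mult_less_cancel_right1 )
      then show ?thesis using step[of n] dpos[of "Suc n"] 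
        by (auto simp: max_def split: if_splits)
    qed
    have dbound: "d n \<le> d 0 * q ^ n" for n
    proof (induction n)
      case 0 then show ?case by simp
    next
      case (Suc n)
      have "d (Suc n) \<le> q * d n" by (rule dstep)
      also have "\<dots> \<le> q * (d 0 * q ^ n)" using Suc qpos by simp
      finally show ?case by (simp add: algebra_simps)
    qed
    define C where "C = d 0 / (1 - q)"
    have Cpos: "C > 0" using dpos[of 0] q1 C_def by simp
    have gk: "G (s n) (s (n + k)) (s (n + k)) \<le> C * q ^ n * (1 - q ^ k)" for n k
    proof (induction k)
      case 0 then show ?case using zz by simp
    next
      case (Suc k)
      have "G (s n) (s (n + Suc k)) (s (n + Suc k)) \<le> G (s n) (s (n + k)) (s (n + k)) + d (n + k)"
        using tri[of "s n" "s (n + Suc k)" "s (n + Suc k)" "s (n + k)"] by (simp add: d_def)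
      also have "\<dots> \<le> C * q ^ n * (1 - q ^ k) + d 0 * q ^ (n + k)"
        using Suc dbound[of "n+k"] by simp
      also have "d 0 = C * (1 - q)" using C_def q1 by simp
      also have "C * q ^ n * (1 - q ^ k) + C * (1 - q) * q ^ (n + k) = C * q ^ n * (1 - q ^ Suc k)"
        by (simp add: power_add algebra_simps)
      finally show ?case .
    qed
    have gb: "G (s n) (s m) (s m) \<le> C * q ^ min n m" for n m
    proof (cases "n \<le> m")
      case True
      then obtain k where k: "m = n + k" using le_Suc_ex by blast
      have "C * q ^ n * (1 - q ^ k) \<le> C * q ^ n" using Cpos qpos by simp
      then show ?thesis using gk[of n k] k True by simp
    next
      case False
      then obtain k where k: "n = m + k" using le_Suc_ex[of m n] by auto
      have "C * q ^ m * (1 - q ^ k) \<le> C * q ^ m" using Cpos qpos by simp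
      moreover have "G (s n) (s m) (s m) = G (s m) (s n) (s n)"
        using sym perm by metis
      ultimately show ?thesis using gk[of m k] k False by simp
    qed
    have cau: "G_Cauchy G s"
      unfolding G_Cauchy_def
    proof (intro allI impI)
      fix e :: real assume e: "e > 0"
      obtain N where N: "q ^ N < e / C" using real_arch_pow_inv[of "e / C" q] e Cpos q1 by auto
      show "\<exists>N. \<forall>n m. N \<le> n \<longrightarrow> N \<le> m \<longrightarrow> G (s n) (s m) (s m) < e"
      proof (intro exI allI impI)
        fix n m assume "N \<le> n" "N \<le> m"
        then have "q ^ min n m \<le> q ^ N" using qpos q1 by (simp add: power_decreasing)
        then have "C * q ^ min n m \<le> C * q ^ N" using Cpos by simp
        moreover have "C * q ^ N < e" using N Cpos by (simp add: pos_less_divide_eq mult.commute)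
        ultimately have "C * q ^ min n m < e" by linarith
        then show "G (s n) (s m) (s m) < e" using gb[of n m] by linarith
      qed
    qed
    have "\<forall>k. s k \<in> orbit T x" unfolding orbit_def s_def by blast
    then obtain u where u: "G_converges G s u" using OC cau unfolding orbitally_complete_def by blast
    have "strict_mono (\<lambda>i::nat. i)" by (simp add: strict_mono_def)
    then have u2: "G_converges G (\<lambda>i. T (s i)) (T u)"
      using OCo u unfolding orbitally_continuous_def s_def by blast
    have "G u (T u) (T u) < e" if e: "e > 0" for e
    proof -
      obtain N1 where N1: "\<forall>n m. N1 \<le> n \<longrightarrow> N1 \<le> m \<longrightarrow> G u (s n) (s m) < e/2"
        using u e unfolding G_converges_def by (meson half_gt_zero)
      obtain N2 where N2: "\<forall>n m. N2 \<le> n \<longrightarrow> N2 \<le> m \<longrightarrow> G (T u) (T (s n)) (T (s m)) < e/2"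
        using u2 e unfolding G_converges_def by (meson half_gt_zero)
      define n where "n = max N1 N2"
      have a1: "G u (s (Suc n)) (s (Suc n)) < e/2" using N1 n_def by simp
      have a2: "G (T u) (s (Suc n)) (s (Suc n)) < e/2" using N2 n_def sS by simp
      have "G (s (Suc n)) (T u) (T u) = G (T u) (s (Suc n)) (s (Suc n))"
        using sym perm by metis
      then show ?thesis using tri[of u "T u" "T u" "s (Suc n)"] a1 a2 by linarith
    qed
    then have "G u (T u) (T u) \<le> 0"
      by (metis less_le_not_le linorder_not_le field_lbound_gt_zero)
    then have "T u = u" using pos2[of u "T u"] by force
    then show ?thesis using u s_eq by auto
  qed
qed

theorem theorem1:
  fixes G :: "'a \<Rightarrow> 'a \<Rightarrow> 'a \<Rightarrow> real"
    and T :: "'a \<Rightarrow> 'a"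
    and a :: "'a \<Rightarrow> 'a \<Rightarrow> 'a \<Rightarrow> real"
    and q :: real
  assumes "G_metric G" and "G_symmetric G"
    and "orbitally_complete G T" and "orbitally_continuous G T" and "inj T"
    and "q < 1"
    and "\<forall>x y z. a x y z \<ge> 0"
    and "\<forall>x y z. x \<noteq> y \<longrightarrow>
           G (T x) (T y) (T z) < q * Max {G x y z,
              a x y z * G (T x) y z * G x (T y) z * G x y (T z),
              inverse (G x y z * G (T x) (T y) (T z)) * G x (T x) (T x) * G y (T y) (T y) * G z (T z) (T z)}"
  shows "(\<forall>x. \<exists>u. G_converges G (\<lambda>n. (T ^^ n) x) u \<and> T u = u) \<and>
         ((\<forall>x y z. x \<noteq> y \<longrightarrow> a x y z \<le> inverse (G x y z * G (T x) (T y) (T z)))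
            \<longrightarrow> (\<exists>!u. T u = u))"
proof -
  have P1: "\<forall>x. \<exists>u. G_converges G (\<lambda>n. (T ^^ n) x) u \<and> T u = u"
    using main_part[OF assms(1-6,8)] by blast
  have nn: "\<And>x y z. G x y z \<ge> 0" and zz: "\<And>x. G x x x = 0"
    and pos: "\<And>x y. x \<noteq> y \<Longrightarrow> G x x y > 0"
    and perm: "\<And>x y z. G x y z = G x z y \<and> G x y z = G y x z \<and> G x y z = G y z x
              \<and> G x y z = G z x y \<and> G x y z = G z y x"
    using assms(1) unfolding G_metric_def by blast+
  have pos2: "\<And>x y. x \<noteq> y \<Longrightarrow> G x y y > 0"
    using pos perm by metis
  have P2: "\<exists>!u. T u = u" if A: "\<forall>x y z. x \<noteq> y \<longrightarrow> a x y z \<le> inverse (G x y z * G (T x) (T y) (T z))"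
  proof -
    obtain u where u: "T u = u" using P1 by blast
    have "v = u" if v: "T v = v" for v
    proof (rule ccontr)
      assume ne: "v \<noteq> u"
      define g where "g = G u v v"
      have gp: "g > 0" using pos2 ne g_def by auto
      have h: "g < q * Max {g, a u v v * g * g * g, inverse (g * g) * 0 * 0 * 0}"
        using assms(8) ne u v g_def zz by (metis (no_types, lifting))
      have al: "a u v v \<le> inverse (g * g)" using A ne u v g_def by metis
      have "a u v v * g * g * g \<le> inverse (g * g) * g * g * g"
        using al gp by (simp add: mult_right_mono)
      also have "\<dots> = g" using gp by (simp add: field_simps)
      finally have m: "Max {g, a u v v * g * g * g, inverse (g * g) * 0 * 0 * 0} = g"
        unfolding Max3 using gp by simp
      have "g < q * g" using h m by simp
      then show False using gp assms(6) by (simp add: mult_less_cancel_right1)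
    qed
    then show ?thesis using u by blast
  qed
  show ?thesis using P1 P2 by blast
qed

end
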